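(* Let $K\lhd\Gamma$ be finitely presented groups with $\Gamma/K\cong\mathbb{Z}$. Let $\mathcal{A}$ be a finite generating set for $K$, let $t\in\Gamma$ be an element whose image generates $\Gamma/K$, and let $\theta$ be the automorphism $x\mapsto txt^{-1}$ of $K$. Let $\mathcal{P}_K=\langle\mathcal{A}\mid\mathcal{R}\rangle$ be a presentation of $K$, and for each $a\in\mathcal{A}$ let $w_a$ be a word over $\mathcal{A}^{\pm1}$ representing $\theta(a)$. Let $\mathcal{S}=\{tat^{-1}w_a^{-1}: a\in\mathcal{A}\}$ and $\mathcal{P}_\Gamma=\langle\mathcal{A},t\mid\mathcal{R},\mathcal{S}\rangle$ (a presentation of $\Gamma$). For each $k\in\mathbb{Z}$ let $\Phi_k$ be an endomorphism of the free monoid on $\mathcal{A}^{\pm1}$ which lifts $\theta^k$ and commutes with formal inversion of words, with $\Phi_0$ the identity. Let $\overline{\mathcal{R}}=\{\Phi_k(r): r\in\mathcal{R}, k\in\mathbb{Z}\}$, $\overline{\mathcal{S}}=\{\Phi_{k+1}(a)\Phi_k(w_a)^{-1}: a\in\mathcal{A}, k\in\mathbb{Z}\}$, and $\mathcal{P}_K^\infty=\langle\mathcal{A}\mid\overline{\mathcal{R}},\overline{\mathcal{S}}\rangle$ (a presentation of $K$), with index $\|\omega\|$ on $\overline{\mathcal{R}}\cup\overline{\mathcal{S}}$ defined as the minimal $|k|$ such that either $\omega\equiv\Phi_k(r)$ for some $r\in\mathcal{R}$ or $\omega\equiv\Phi_{k+1}(a)\Phi_k(w_a)^{-1}$ for some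 $a\in\mathcal{A}$. If $(\alpha,\rho)$ is an area-radius pair for $\mathcal{P}_\Gamma$, then $(\alpha,\rho)$ is an area-penetration pair for $(\mathcal{P}_K^\infty,\|\cdot\|)$.
   Context: $\equiv$ denotes equality of words (letter by letter). For a presentation $\mathcal{P}=\langle\mathcal{B}\mid\mathcal{T}\rangle$ with $\mathcal{B}$ finite and a word $w$ over $\mathcal{B}^{\pm1}$ representing the identity, a null-$\mathcal{P}$-expression is a sequence $(x_i,r_i)_{i=1}^m$ with $x_i$ words and $r_i\in\mathcal{T}^{\pm1}$ such that $w$ is freely equal to $\prod_{i=1}^m x_ir_ix_i^{-1}$; its area is $m$ and radius $\max_i|x_i|$. $(\alpha,\rho)$ is an area-radius pair for $\mathcal{P}$ if every null-homotopic word of length $\le n$ has a null-$\mathcal{P}$-expression with area $\le\alpha(n)$ and radius $\le\rho(n)$. Given an index $\|\cdot\|:\mathcal{T}\to\mathbb{N}$ (extended by $\|r^{-1}\|=\|r\|$), $(\alpha,\pi)$ is an area-penetration pair for $(\mathcal{P},\|\cdot\|)$ if every null-homotopic word of length $\le n$ has a null-$\mathcal{P}$-expression $(x_i,r_i)_{i=1}^m$ with $m\le\alpha(n)$ and $\|r_i\|\le\pi(n)$ for all $i$. *)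

theory Defs
  imports "HOL-Algebra.Algebra"
begin

text \<open>Words over an alphabet: lists of letters (x, b), where b = True means x and
  b = False means the formal inverse x^-1.\<close>
type_synonym 'a word = "('a \<times> bool) list"

definition words :: "'a set \<Rightarrow> 'a word set" where
  "words B = {w. \<forall>l \<in> set w. fst l \<in> B}"

definition inv_letter :: "'a \<times> bool \<Rightarrow> 'a \<times> bool" where
  "inv_letter l = (fst l, \<not> snd l)"

definition winv :: "'a word \<Rightarrow> 'a word" where
  "winv w = rev (map inv_letter w)"

inductive red1 :: "'a word \<Rightarrow> 'a word \<Rightarrow> bool" where
  "red1 (u @ [l, inv_letter l] @ v) (u @ v)"

definition free_eq :: "'a word \<Rightarrow> 'a word \<Rightarrow> bool" where
  "free_eq = equivclp red1"

definition null_expr :: "'a set \<Rightarrow> 'a word set \<Rightarrow> 'a word \<Rightarrow> ('a word \<times> 'a word) list \<Rightarrow> bool" where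
  "null_expr B T w es \<longleftrightarrow>
     (\<forall>(x, r) \<in> set es. x \<in> words B \<and> (r \<in> T \<or> r \<in> winv ` T)) \<and>
     free_eq w (concat (map (\<lambda>(x, r). x @ r @ winv x) es))"

definition null_hom :: "'a set \<Rightarrow> 'a word set \<Rightarrow> 'a word \<Rightarrow> bool" where
  "null_hom B T w \<longleftrightarrow> w \<in> words B \<and> (\<exists>es. null_expr B T w es)"

definition area_radius_pair ::
  "'a set \<Rightarrow> 'a word set \<Rightarrow> (nat \<Rightarrow> nat) \<Rightarrow> (nat \<Rightarrow> nat) \<Rightarrow> bool" where
  "area_radius_pair B T \<alpha> \<rho> \<longleftrightarrow>
     (\<forall>n w. null_hom B T w \<and> length w \<le> n \<longrightarrow>
        (\<exists>es. null_expr B T w es \<and> length es \<le> \<alpha> n \<and>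
              (\<forall>(x, r) \<in> set es. length x \<le> \<rho> n)))"

text \<open>Area-penetration pair; the index is extended to inverses by ||r^-1|| = ||r||.\<close>
definition area_pen_pair ::
  "'a set \<Rightarrow> 'a word set \<Rightarrow> ('a word \<Rightarrow> nat) \<Rightarrow> (nat \<Rightarrow> nat) \<Rightarrow> (nat \<Rightarrow> nat) \<Rightarrow> bool" where
  "area_pen_pair B T idx \<alpha> \<pi> \<longleftrightarrow>
     (\<forall>n w. null_hom B T w \<and> length w \<le> n \<longrightarrow>
        (\<exists>es. null_expr B T w es \<and> length es \<le> \<alpha> n \<and>
              (\<forall>(x, r) \<in> set es. \<exists>r0 \<in> T. (r = r0 \<or> r = winv r0) \<and> idx r0 \<le> \<pi> n)))"

definition wval :: "('g, 'b) monoid_scheme \<Rightarrow> 'g word \<Rightarrow> 'g" where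
  "wval G w = foldr (\<lambda>l acc. (if snd l then fst l else inv\<^bsub>G\<^esub> (fst l)) \<otimes>\<^bsub>G\<^esub> acc) w \<one>\<^bsub>G\<^esub>"

definition presents :: "('g, 'b) monoid_scheme \<Rightarrow> 'g set \<Rightarrow> 'g word set \<Rightarrow> bool" where
  "presents G A R \<longleftrightarrow> A \<subseteq> carrier G \<and> R \<subseteq> words A \<and>
     carrier G = wval G ` words A \<and>
     (\<forall>w \<in> words A. wval G w = \<one>\<^bsub>G\<^esub> \<longleftrightarrow> null_hom A R w)"

definition finitely_presented :: "('g, 'b) monoid_scheme \<Rightarrow> bool" where
  "finitely_presented G \<longleftrightarrow> (\<exists>A R. finite A \<and> finite R \<and> presents G A R)"

definition phi_ext :: "('a \<Rightarrow> 'a word) \<Rightarrow> 'a word \<Rightarrow> 'a word" where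
  "phi_ext f w = concat (map (\<lambda>l. if snd l then f (fst l) else winv (f (fst l))) w)"

definition Rbar :: "(int \<Rightarrow> 'a \<Rightarrow> 'a word) \<Rightarrow> 'a word set \<Rightarrow> 'a word set" where
  "Rbar \<Phi> R = {phi_ext (\<Phi> k) r | r k. r \<in> R}"

definition Sbar :: "(int \<Rightarrow> 'a \<Rightarrow> 'a word) \<Rightarrow> 'a set \<Rightarrow> ('a \<Rightarrow> 'a word) \<Rightarrow> 'a word set" where
  "Sbar \<Phi> A w = {\<Phi> (k + 1) a @ winv (phi_ext (\<Phi> k) (w a)) | a k. a \<in> A}"

definition Kidx :: "(int \<Rightarrow> 'a \<Rightarrow> 'a word) \<Rightarrow> 'a set \<Rightarrow> 'a word set \<Rightarrow> ('a \<Rightarrow> 'a word) \<Rightarrow> 'a word \<Rightarrow> nat" where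
  "Kidx \<Phi> A R w \<omega> = (LEAST m. \<exists>k. m = nat \<bar>k\<bar> \<and>
      ((\<exists>r \<in> R. \<omega> = phi_ext (\<Phi> k) r) \<or>
       (\<exists>a \<in> A. \<omega> = \<Phi> (k + 1) a @ winv (phi_ext (\<Phi> k) (w a)))))"

definition Sset :: "'a \<Rightarrow> 'a set \<Rightarrow> ('a \<Rightarrow> 'a word) \<Rightarrow> 'a word set" where
  "Sset t A w = {[(t, True), (a, True), (t, False)] @ winv (w a) | a. a \<in> A}"

end

theory Submission
  imports Defs
begin


lemma equivclp_map:
  assumes "\<And>a b. r a b \<Longrightarrow> equivclp s (f a) (f b)" and "equivclp r x y"
  shows "equivclp s (f x) (f y)"
  using assms(2)
proof (induction rule: equivclp_induct)
  case base then show ?case by (simp add: equivclp_def)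
next
  case (step y z)
  have "equivclp s (f y) (f z)"
    using step(2) assms(1) equivclp_sym by metis
  then show ?case using step(3) transpD[OF transp_equivclp] by metis
qed

lemma free_eq_refl[simp]: "free_eq x x" by (simp add: free_eq_def equivclp_def)
lemma free_eq_sym: "free_eq x y \<Longrightarrow> free_eq y x" by (simp add: free_eq_def equivclp_sym)
lemma free_eq_trans: "free_eq x y \<Longrightarrow> free_eq y z \<Longrightarrow> free_eq x z"
  unfolding free_eq_def using transpD[OF transp_equivclp] by metis
lemma red1_free_eq: "red1 x y \<Longrightarrow> free_eq x y"
  unfolding free_eq_def equivclp_def by (simp add: r_into_rtranclp)

lemma red1_ctx: "red1 a b \<Longrightarrow> red1 (p @ a @ q) (p @ b @ q)"
proof (induction rule: red1.cases)
  case (1 u l v)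
  then show ?case using red1.intros[of "p @ u" l "v @ q"] by simp
qed

lemma free_eq_ctx: "free_eq a b \<Longrightarrow> free_eq (p @ a @ q) (p @ b @ q)"
  unfolding free_eq_def
  by (rule equivclp_map[where f="\<lambda>x. p @ x @ q"])
     (auto intro!: r_into_rtranclp red1_ctx simp: equivclp_def symclp_def)

lemma inv_letter_inv[simp]: "inv_letter (inv_letter l) = l"
  by (simp add: inv_letter_def)
lemma winv_Nil[simp]: "winv [] = []" by (simp add: winv_def)
lemma winv_Cons[simp]: "winv (l # ls) = winv ls @ [inv_letter l]" by (simp add: winv_def)
lemma winv_append[simp]: "winv (u @ v) = winv v @ winv u" by (simp add: winv_def)
lemma winv_winv[simp]: "winv (winv u) = u" by (induction u) auto

lemma free_eq_cancel: "free_eq (p @ zs @ winv zs @ q) (p @ q)"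
proof (induction zs arbitrary: p q)
  case Nil then show ?case by simp
next
  case (Cons l ls)
  have "free_eq ((p @ [l]) @ ls @ winv ls @ ([inv_letter l] @ q)) ((p @ [l]) @ ([inv_letter l] @ q))"
    by (rule Cons)
  moreover have "red1 (p @ [l, inv_letter l] @ q) (p @ q)" by (rule red1.intros)
  ultimately show ?case
    by (auto intro: free_eq_trans red1_free_eq)
qed

lemma free_eq_cancel': "free_eq (p @ winv zs @ zs @ q) (p @ q)"
  using free_eq_cancel[of p "winv zs" q] by simp



definition limg :: "(int \<Rightarrow> 'a \<Rightarrow> 'a word) \<Rightarrow> int \<Rightarrow> 'a \<times> bool \<Rightarrow> 'a word" where
  "limg \<Phi> k l = (if snd l then \<Phi> k (fst l) else winv (\<Phi> k (fst l)))"

fun texp :: "'a \<Rightarrow> 'a \<times> bool \<Rightarrow> int" where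
  "texp t l = (if fst l = t then (if snd l then 1 else -1) else 0)"

fun expo :: "'a \<Rightarrow> 'a word \<Rightarrow> int" where
  "expo t [] = 0"
| "expo t (l # ls) = texp t l + expo t ls"

fun psi :: "'a \<Rightarrow> (int \<Rightarrow> 'a \<Rightarrow> 'a word) \<Rightarrow> int \<Rightarrow> 'a word \<Rightarrow> 'a word" where
  "psi t \<Phi> k [] = []"
| "psi t \<Phi> k (l # ls) = (if fst l = t then psi t \<Phi> (k + texp t l) ls else limg \<Phi> k l @ psi t \<Phi> k ls)"

declare texp.simps[simp del]

lemma expo_append[simp]: "expo t (u @ v) = expo t u + expo t v"
  by (induction u) auto

lemma texp_inv[simp]: "texp t (inv_letter l) = - texp t l"
  by (simp add: texp.simps inv_letter_def)

lemma expo_winv[simp]: "expo t (winv u) = - expo t u"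
  by (induction u) auto

lemma psi_append: "psi t \<Phi> k (u @ v) = psi t \<Phi> k u @ psi t \<Phi> (k + expo t u) v"
  by (induction u arbitrary: k) (auto simp: texp.simps add.assoc)

lemma texp_not_t: "fst l \<noteq> t \<Longrightarrow> texp t l = 0" by (simp add: texp.simps)

lemma limg_inv: "limg \<Phi> k (inv_letter l) = winv (limg \<Phi> k l)"
  by (simp add: limg_def inv_letter_def)

lemma psi_winv: "psi t \<Phi> (k + expo t x) (winv x) = winv (psi t \<Phi> k x)"
proof (induction x arbitrary: k)
  case Nil then show ?case by simp
next
  case (Cons l ls)
  have IH: "psi t \<Phi> (k + texp t l + expo t ls) (winv ls) = winv (psi t \<Phi> (k + texp t l) ls)"
    using Cons by simp
  show ?case
  proof (cases "fst l = t")
    case True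
    then show ?thesis using IH by (simp add: psi_append add.assoc inv_letter_def)
  next
    case False
    then have "texp t l = 0" by (rule texp_not_t)
    then show ?thesis using IH False
      by (simp add: psi_append inv_letter_def limg_inv[unfolded inv_letter_def])
  qed
qed

lemma psi_winv0: "expo t x = 0 \<Longrightarrow> psi t \<Phi> k (winv x) = winv (psi t \<Phi> k x)"
  using psi_winv[of t \<Phi> k x] by simp

lemma psi_red1: "red1 a b \<Longrightarrow> free_eq (psi t \<Phi> k a) (psi t \<Phi> k b)"
proof (induction rule: red1.induct)
  case (1 u l v)
  let ?k = "k + expo t u"
  have e: "expo t [l, inv_letter l] = 0" by simp
  have eq: "psi t \<Phi> k (u @ [l, inv_letter l] @ v) = psi t \<Phi> k u @ psi t \<Phi> ?k [l, inv_letter l] @ psi t \<Phi> ?k v"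
    unfolding psi_append[of t \<Phi> k u] psi_append[of t \<Phi> ?k "[l, inv_letter l]" v] e by simp
  show ?case
  proof (cases "fst l = t")
    case True
    then have "psi t \<Phi> ?k [l, inv_letter l] = []" by (simp add: inv_letter_def)
    then show ?thesis unfolding eq by (simp add: psi_append)
  next
    case False
    then have "psi t \<Phi> ?k [l, inv_letter l] = limg \<Phi> ?k l @ winv (limg \<Phi> ?k l)"
      by (simp add: inv_letter_def limg_inv[unfolded inv_letter_def])
    then show ?thesis unfolding eq using free_eq_cancel[of "psi t \<Phi> k u" "limg \<Phi> ?k l" "psi t \<Phi> ?k v"]
      by (simp add: psi_append)
  qed
qed

lemma psi_free_eq: "free_eq a b \<Longrightarrow> free_eq (psi t \<Phi> k a) (psi t \<Phi> k b)"
  unfolding free_eq_def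
  by (rule equivclp_map[where f="psi t \<Phi> k"]) (auto intro: psi_red1[unfolded free_eq_def])

lemma red1_expo: "red1 a b \<Longrightarrow> expo t a = expo t b"
  by (induction rule: red1.cases) auto

lemma psi_noT: "t \<notin> fst ` set r \<Longrightarrow> psi t \<Phi> k r = phi_ext (\<Phi> k) r"
  by (induction r) (auto simp: phi_ext_def limg_def)

lemma expo_noT: "t \<notin> fst ` set r \<Longrightarrow> expo t r = 0"
  by (induction r) (auto simp: texp.simps)

lemma psi_words: "x \<in> words (insert t A) \<Longrightarrow> \<forall>j. \<forall>a\<in>A. \<Phi> j a \<in> words A \<Longrightarrow> psi t \<Phi> k x \<in> words A"
proof (induction x arbitrary: k)
  case Nil then show ?case by (simp add: words_def)
next
  case (Cons l ls)
  have w: "\<forall>j. \<forall>a\<in>A. winv (\<Phi> j a) \<in> words A"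
    using Cons.prems(2) by (auto simp: words_def winv_def inv_letter_def)
  have "limg \<Phi> k l \<in> words A" if "fst l \<noteq> t"
  proof -
    have "fst l \<in> A" using Cons.prems that by (auto simp: words_def)
    then show ?thesis using Cons.prems(2) w by (simp add: limg_def)
  qed
  moreover have "psi t \<Phi> j ls \<in> words A" for j
    using Cons by (auto simp: words_def)
  ultimately show ?case by (auto simp: words_def)
qed

lemma abs_expo: "\<bar>expo t x\<bar> \<le> int (length x)"
  by (induction x) (auto simp: texp.simps)

lemma psi0: "x \<in> words A \<Longrightarrow> t \<notin> A \<Longrightarrow> \<forall>a\<in>A. \<Phi> 0 a = [(a, True)] \<Longrightarrow> psi t \<Phi> 0 x = x"
  by (induction x) (auto simp: words_def limg_def winv_def inv_letter_def)


definition ev :: "('g, 'b) monoid_scheme \<Rightarrow> 'g set \<Rightarrow> 'g word \<Rightarrow> 'g" where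
  "ev G S w = foldr (\<lambda>l acc. if fst l \<in> S then (if snd l then fst l else inv\<^bsub>G\<^esub> (fst l)) \<otimes>\<^bsub>G\<^esub> acc else acc) w \<one>\<^bsub>G\<^esub>"
context group begin
lemma ev_Nil[simp]: "ev G S [] = \<one>" by (simp add: ev_def)
lemma ev_Cons: "ev G S (l # ls) = (if fst l \<in> S then (if snd l then fst l else inv (fst l)) \<otimes> ev G S ls else ev G S ls)"
  by (simp add: ev_def)
lemma ev_closed[simp]: "S \<subseteq> carrier G \<Longrightarrow> ev G S w \<in> carrier G"
  by (induction w) (auto simp: ev_Cons)
lemma ev_append: "S \<subseteq> carrier G \<Longrightarrow> ev G S (u @ v) = ev G S u \<otimes> ev G S v"
proof (induction u)
  case Nil then show ?case by simp
next
  case (Cons l ls)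
  then show ?case
  proof (cases "fst l \<in> S")
    case True
    then have "fst l \<in> carrier G" using Cons.prems by blast
    then show ?thesis using True Cons by (simp add: ev_Cons m_assoc)
  qed (simp add: ev_Cons)
qed
lemma ev_winv: "S \<subseteq> carrier G \<Longrightarrow> ev G S (winv u) = inv (ev G S u)"
proof (induction u)
  case Nil then show ?case by simp
next
  case (Cons l ls)
  show ?case
  proof (cases "fst l \<in> S")
    case True
    then have c: "fst l \<in> carrier G" using Cons.prems by blast
    show ?thesis using True Cons c
      by (simp add: ev_append ev_Cons inv_letter_def inv_mult_group)
  next
    case False
    show ?thesis using False Cons
      by (simp add: ev_append ev_Cons inv_letter_def)
  qed
qed
lemma ev_red1: "red1 a b \<Longrightarrow> S \<subseteq> carrier G \<Longrightarrow> ev G S a = ev G S b"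
proof (induction rule: red1.induct)
  case (1 u l v)
  have "ev G S [l, inv_letter l] = \<one>"
  proof (cases "fst l \<in> S")
    case True
    then have "fst l \<in> carrier G" using 1 by blast
    then show ?thesis using True by (simp add: ev_Cons inv_letter_def)
  qed (simp add: ev_Cons inv_letter_def)
  moreover have "ev G S (u @ [l, inv_letter l] @ v) = ev G S u \<otimes> ev G S [l, inv_letter l] \<otimes> ev G S v"
    using 1 by (simp only: ev_append m_assoc ev_closed)
  ultimately show ?case using 1 by (simp add: ev_append)
qed

lemma ev_free_eq: "free_eq a b \<Longrightarrow> S \<subseteq> carrier G \<Longrightarrow> ev G S a = ev G S b"
  unfolding free_eq_def
proof (induction rule: equivclp_induct)
  case base then show ?case by simp
next
  case (step y z) then show ?case using ev_red1 by metis
qed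

lemma ev_words: "w \<in> words S \<Longrightarrow> ev G S w = wval G w"
  by (induction w) (simp_all add: ev_Cons wval_def words_def)

lemma wval_sub: "subgroup H G \<Longrightarrow> w \<in> words S \<Longrightarrow> S \<subseteq> H \<Longrightarrow> wval (G\<lparr>carrier := H\<rparr>) w = wval G w"
proof (induction w)
  case Nil then show ?case by (simp add: wval_def)
next
  case (Cons l ls)
  have "fst l \<in> H" "ls \<in> words S" using Cons.prems by (auto simp: words_def)
  then show ?case using Cons by (simp add: wval_def)
qed

lemma ev_phi:
  assumes "S \<subseteq> carrier G" "c \<in> carrier G"
    and "\<forall>a\<in>S. ev G S (f a) = c \<otimes> a \<otimes> inv c"
    and "r \<in> words S"
  shows "ev G S (phi_ext f r) = c \<otimes> ev G S r \<otimes> inv c"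
  using assms(4)
proof (induction r)
  case Nil then show ?case using assms by (simp add: phi_ext_def)
next
  case (Cons l ls)
  have ls: "ls \<in> words S" "fst l \<in> S" using Cons.prems by (auto simp: words_def)
  have pc: "phi_ext f (l # ls) = (if snd l then f (fst l) else winv (f (fst l))) @ phi_ext f ls"
    by (simp add: phi_ext_def)
  have x: "fst l \<in> carrier G" using ls assms by auto
  define y where "y = (if snd l then fst l else inv (fst l))"
  have y: "y \<in> carrier G" using x by (simp add: y_def)
  have e: "ev G S (if snd l then f (fst l) else winv (f (fst l))) = c \<otimes> y \<otimes> inv c"
  proof (cases "snd l")
    case True then show ?thesis using assms ls by (simp add: y_def)
  next
    case False
    have "inv (c \<otimes> fst l \<otimes> inv c) = c \<otimes> inv (fst l) \<otimes> inv c"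
      using x assms(2) by (simp add: inv_mult_group m_assoc)
    then show ?thesis using False assms ls by (simp add: y_def ev_winv)
  qed
  have "ev G S (phi_ext f (l # ls)) = (c \<otimes> y \<otimes> inv c) \<otimes> (c \<otimes> ev G S ls \<otimes> inv c)"
    unfolding pc ev_append[OF assms(1)] e Cons.IH[OF ls(1)] ..
  also have "\<dots> = c \<otimes> (y \<otimes> ev G S ls) \<otimes> inv c"
    using x y assms ev_closed[OF assms(1), of ls] by (simp add: m_assoc inv_solve_left')
  finally show ?case using ls by (simp add: ev_Cons y_def)
qed

end


lemma null_expr_mono: "null_expr B T u es \<Longrightarrow> B \<subseteq> B' \<Longrightarrow> T \<subseteq> T' \<Longrightarrow> null_expr B' T' u es"
  unfolding null_expr_def words_def by fastforce

lemma psi_rel: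
  assumes tA: "t \<notin> A" and RA: "R \<subseteq> words A" and wA: "\<forall>a \<in> A. w a \<in> words A"
    and r: "r \<in> R \<union> Sset t A w"
  shows "expo t r = 0 \<and> psi t \<Phi> k r \<in> Rbar \<Phi> R \<union> Sbar \<Phi> A w \<and> Kidx \<Phi> A R w (psi t \<Phi> k r) \<le> nat \<bar>k\<bar>"
proof (cases "r \<in> R")
  case True
  then have nt: "t \<notin> fst ` set r" using RA tA by (auto simp: words_def)
  have p: "psi t \<Phi> k r = phi_ext (\<Phi> k) r" by (rule psi_noT[OF nt])
  have "Kidx \<Phi> A R w (psi t \<Phi> k r) \<le> nat \<bar>k\<bar>"
    unfolding Kidx_def p by (rule Least_le) (use True in blast)
  then show ?thesis using expo_noT[OF nt] p True by (auto simp: Rbar_def)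
next
  case False
  then obtain a where a: "a \<in> A" and rr: "r = [(t, True), (a, True), (t, False)] @ winv (w a)"
    using r by (auto simp: Sset_def)
  have nt: "t \<notin> fst ` set (w a)" using wA a tA by (auto simp: words_def)
  have at: "a \<noteq> t" using a tA by auto
  have e: "expo t r = 0" using rr expo_noT[OF nt] at by (simp add: texp.simps)
  have "psi t \<Phi> k r = psi t \<Phi> k [(t, True), (a, True), (t, False)] @ psi t \<Phi> k (winv (w a))"
    using rr psi_append[of t \<Phi> k "[(t, True), (a, True), (t, False)]" "winv (w a)"] at
    by (simp add: texp.simps)
  also have "\<dots> = \<Phi> (k + 1) a @ winv (phi_ext (\<Phi> k) (w a))"
    using at psi_winv0[OF expo_noT[OF nt], of \<Phi> k] psi_noT[OF nt, of \<Phi> k]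
    by (simp add: texp.simps limg_def)
  finally have p: "psi t \<Phi> k r = \<Phi> (k + 1) a @ winv (phi_ext (\<Phi> k) (w a))" .
  have "Kidx \<Phi> A R w (psi t \<Phi> k r) \<le> nat \<bar>k\<bar>"
    unfolding Kidx_def p by (rule Least_le) (use a in blast)
  then show ?thesis using e p a by (auto simp: Sbar_def)
qed

lemma psi_concat:
  "(\<forall>(x, r) \<in> set es. expo t r = 0) \<Longrightarrow>
   psi t \<Phi> 0 (concat (map (\<lambda>(x, r). x @ r @ winv x) es)) =
   concat (map (\<lambda>(x, r). x @ r @ winv x) (map (\<lambda>(x, r). (psi t \<Phi> 0 x, psi t \<Phi> (expo t x) r)) es))"
proof (induction es)
  case Nil then show ?case by simp
next
  case (Cons e es)
  obtain x r where e: "e = (x, r)" by fastforce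
  have r0: "expo t r = 0" using Cons.prems e by auto
  have p1: "psi t \<Phi> 0 (x @ r @ winv x) = psi t \<Phi> 0 x @ psi t \<Phi> (expo t x) r @ winv (psi t \<Phi> 0 x)"
    using psi_winv[of t \<Phi> 0 x] r0 by (simp add: psi_append)
  moreover have "expo t (x @ r @ winv x) = 0" using r0 by simp
  ultimately have h: "psi t \<Phi> 0 ((x @ r @ winv x) @ concat (map (\<lambda>(x, r). x @ r @ winv x) es))
     = psi t \<Phi> 0 (x @ r @ winv x) @ psi t \<Phi> 0 (concat (map (\<lambda>(x, r). x @ r @ winv x) es))"
    using psi_append[of t \<Phi> 0 "x @ r @ winv x" "concat (map (\<lambda>(x, r). x @ r @ winv x) es)"] by simp
  show ?case using h p1 Cons e by simp
qed



lemma ev_concat_one: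
  assumes "group G" "S \<subseteq> carrier G"
    and "\<forall>(x, r) \<in> set es. x \<in> words S \<and> ev G S r = \<one>\<^bsub>G\<^esub>"
  shows "ev G S (concat (map (\<lambda>(x, r). x @ r @ winv x) es)) = \<one>\<^bsub>G\<^esub>"
  using assms(3)
proof (induction es)
  case Nil then show ?case using group.ev_Nil[OF assms(1)] by simp
next
  case (Cons e es)
  interpret G: group G by fact
  obtain x r where e: "e = (x, r)" by fastforce
  have r: "ev G S r = \<one>\<^bsub>G\<^esub>" using Cons.prems e by auto
  have "ev G S (x @ r @ winv x) = \<one>\<^bsub>G\<^esub>"
    using assms(2) r by (simp add: G.ev_append G.ev_winv)
  then show ?case using Cons e assms(2) by (simp add: G.ev_append)
qed

theorem theorem3p1:
  fixes G :: "('g, 'b) monoid_scheme" and K :: "'g set" and t :: 'g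
    and A :: "'g set" and R :: "'g word set" and w :: "'g \<Rightarrow> 'g word"
    and \<Phi> :: "int \<Rightarrow> 'g \<Rightarrow> 'g word" and \<alpha> \<rho> :: "nat \<Rightarrow> nat"
  assumes "group G" and "K \<lhd> G"
    and "finitely_presented G" and "finitely_presented (G\<lparr>carrier := K\<rparr>)"
    and "G Mod K \<cong> integer_group"
    and "t \<in> carrier G"
    and "generate (G Mod K) {K #>\<^bsub>G\<^esub> t} = carrier (G Mod K)"
    and "finite A" and "A \<subseteq> K" and "generate G A = K"
    and "presents (G\<lparr>carrier := K\<rparr>) A R"
    and "\<forall>a \<in> A. w a \<in> words A \<and> wval G (w a) = t \<otimes>\<^bsub>G\<^esub> a \<otimes>\<^bsub>G\<^esub> inv\<^bsub>G\<^esub> t"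
    and "\<forall>k. \<forall>a \<in> A. \<Phi> k a \<in> words A \<and>
           wval G (\<Phi> k a) = (t [^]\<^bsub>G\<^esub> k) \<otimes>\<^bsub>G\<^esub> a \<otimes>\<^bsub>G\<^esub> inv\<^bsub>G\<^esub> (t [^]\<^bsub>G\<^esub> k)"
    and "\<forall>a \<in> A. \<Phi> 0 a = [(a, True)]"
    and "area_radius_pair (insert t A) (R \<union> Sset t A w) \<alpha> \<rho>"
  shows "area_pen_pair A (Rbar \<Phi> R \<union> Sbar \<Phi> A w) (Kidx \<Phi> A R w) \<alpha> \<rho>"
proof -
  interpret G: group G by fact
  have subK: "subgroup K G" using assms(2) by (rule normal_imp_subgroup)
  have AG: "A \<subseteq> carrier G" using assms(9) subK subgroup.subset by blast
  have tK: "t \<notin> K"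
  proof
    assume tK: "t \<in> K"
    have gq: "group (G Mod K)" using assms(2) by (rule normal.factorgroup_is_group)
    have "K #>\<^bsub>G\<^esub> t = K" using subgroup.rcos_const[OF subK assms(1) tK] .
    then have "carrier (G Mod K) = {K}"
      using assms(7) group.generate_one[OF gq] by simp
    moreover obtain h where "h \<in> iso (G Mod K) integer_group"
      using assms(5) unfolding is_iso_def by blast
    ultimately have "bij_betw h {K} (UNIV :: int set)" by (simp add: iso_def)
    then have "(UNIV :: int set) = {h K}" by (simp add: bij_betw_def)
    then show False by (metis UNIV_I singletonD zero_neq_one)
  qed
  have tA: "t \<notin> A" using tK assms(9) by blast
  have RA: "R \<subseteq> words A" using assms(11) by (simp add: presents_def)
  have wA: "\<forall>a \<in> A. w a \<in> words A" using assms(12) by blast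
  let ?T = "Rbar \<Phi> R \<union> Sbar \<Phi> A w"
  have tpow: "t [^]\<^bsub>G\<^esub> (k::int) \<in> carrier G" for k using assms(6) by simp
  have evPhi: "\<forall>a\<in>A. ev G A (\<Phi> k a) = t [^]\<^bsub>G\<^esub> k \<otimes>\<^bsub>G\<^esub> a \<otimes>\<^bsub>G\<^esub> inv\<^bsub>G\<^esub> (t [^]\<^bsub>G\<^esub> k)" for k
    using assms(13) G.ev_words by auto
  have evR: "ev G A r = \<one>\<^bsub>G\<^esub>" if "r \<in> R" for r
  proof -
    have rA: "r \<in> words A" using that RA by blast
    have "null_expr A R r [([], r)]" using that by (simp add: null_expr_def words_def)
    then have "null_hom A R r" using rA by (auto simp: null_hom_def)
    then have "wval (G\<lparr>carrier := K\<rparr>) r = \<one>\<^bsub>G\<lparr>carrier := K\<rparr>\<^esub>"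
      using assms(11) rA by (simp add: presents_def)
    then show ?thesis using G.wval_sub[OF subK rA assms(9)] G.ev_words[OF rA] by simp
  qed
  have evT: "ev G A r = \<one>\<^bsub>G\<^esub>" if rT: "r \<in> ?T" for r
  proof (cases "r \<in> Rbar \<Phi> R")
    case True
    then obtain r0 k where r0: "r0 \<in> R" "r = phi_ext (\<Phi> k) r0" by (auto simp: Rbar_def)
    have "ev G A r = t [^]\<^bsub>G\<^esub> k \<otimes>\<^bsub>G\<^esub> ev G A r0 \<otimes>\<^bsub>G\<^esub> inv\<^bsub>G\<^esub> (t [^]\<^bsub>G\<^esub> k)"
      unfolding r0(2) by (rule G.ev_phi[OF AG tpow evPhi]) (use r0 RA in blast)
    then show ?thesis using evR[OF r0(1)] tpow[of k] by simp
  next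
    case False
    then obtain a k where a: "a \<in> A" "r = \<Phi> (k + 1) a @ winv (phi_ext (\<Phi> k) (w a))"
      using rT False by (auto simp: Sbar_def)
    have aG: "a \<in> carrier G" using a AG by blast
    have ew: "ev G A (w a) = t \<otimes>\<^bsub>G\<^esub> a \<otimes>\<^bsub>G\<^esub> inv\<^bsub>G\<^esub> t"
      using assms(12) a G.ev_words by auto
    have "ev G A (phi_ext (\<Phi> k) (w a)) = t [^]\<^bsub>G\<^esub> k \<otimes>\<^bsub>G\<^esub> ev G A (w a) \<otimes>\<^bsub>G\<^esub> inv\<^bsub>G\<^esub> (t [^]\<^bsub>G\<^esub> k)"
      by (rule G.ev_phi[OF AG tpow evPhi]) (use a wA in blast)
    also have "\<dots> = t [^]\<^bsub>G\<^esub> (k + 1) \<otimes>\<^bsub>G\<^esub> a \<otimes>\<^bsub>G\<^esub> inv\<^bsub>G\<^esub> (t [^]\<^bsub>G\<^esub> (k + 1))"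
      using assms(6) aG tpow[of k] by (simp add: ew G.int_pow_mult G.inv_mult_group G.m_assoc)
    finally have "ev G A (phi_ext (\<Phi> k) (w a)) = ev G A (\<Phi> (k + 1) a)"
      using evPhi[of "k+1"] a by simp
    then show ?thesis using a AG by (simp add: G.ev_append G.ev_winv)
  qed
  show ?thesis
    unfolding area_pen_pair_def
  proof (intro allI impI)
    fix n u
    assume h: "null_hom A ?T u \<and> length u \<le> n"
    then have uA: "u \<in> words A" and len: "length u \<le> n" by (auto simp: null_hom_def)
    obtain es0 where es0: "null_expr A ?T u es0" using h by (auto simp: null_hom_def)
    have "ev G A (concat (map (\<lambda>(x, r). x @ r @ winv x) es0)) = \<one>\<^bsub>G\<^esub>"
    proof (rule ev_concat_one[OF assms(1) AG])
      show "\<forall>(x, r)\<in>set es0. x \<in> words A \<and> ev G A r = \<one>\<^bsub>G\<^esub>"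
        using es0 evT AG by (fastforce simp: null_expr_def G.ev_winv)
    qed
    then have "ev G A u = \<one>\<^bsub>G\<^esub>" using es0 G.ev_free_eq[OF _ AG] by (auto simp: null_expr_def)
    then have "wval (G\<lparr>carrier := K\<rparr>) u = \<one>\<^bsub>G\<lparr>carrier := K\<rparr>\<^esub>"
      using G.wval_sub[OF subK uA assms(9)] G.ev_words[OF uA] by simp
    then have "null_hom A R u" using assms(11) uA by (simp add: presents_def)
    then have "null_hom (insert t A) (R \<union> Sset t A w) u"
      unfolding null_hom_def using null_expr_mono[of A R u _ "insert t A" "R \<union> Sset t A w"]
      by (auto simp: words_def)
    then obtain es where es: "null_expr (insert t A) (R \<union> Sset t A w) u es"
      "length es \<le> \<alpha> n" "\<forall>(x, r) \<in> set es. length x \<le> \<rho> n"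
      using assms(15) len unfolding area_radius_pair_def by blast
    define es' where "es' = map (\<lambda>(x, r). (psi t \<Phi> 0 x, psi t \<Phi> (expo t x) r)) es"
    have elem: "psi t \<Phi> 0 x \<in> words A \<and> (\<exists>r0 \<in> ?T. (psi t \<Phi> (expo t x) r = r0 \<or> psi t \<Phi> (expo t x) r = winv r0)
        \<and> Kidx \<Phi> A R w r0 \<le> \<rho> n) \<and> expo t r = 0"
      if xr: "(x, r) \<in> set es" for x r
    proof -
      have x: "x \<in> words (insert t A)" and rr: "r \<in> R \<union> Sset t A w \<or> r \<in> winv ` (R \<union> Sset t A w)"
        using es(1) xr by (auto simp: null_expr_def)
      have lx: "nat \<bar>expo t x\<bar> \<le> \<rho> n"
        using es(3) xr abs_expo[of t x] by fastforce
      have pw: "psi t \<Phi> 0 x \<in> words A"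
        using psi_words[OF x] assms(13) by blast
      show ?thesis
      proof (cases "r \<in> R \<union> Sset t A w")
        case True
        from psi_rel[OF tA RA wA True, of \<Phi> "expo t x"] show ?thesis
          using pw lx by fastforce
      next
        case False
        then obtain r1 where r1: "r1 \<in> R \<union> Sset t A w" "r = winv r1" using rr by blast
        from psi_rel[OF tA RA wA r1(1), of \<Phi> "expo t x"] show ?thesis
          using pw lx r1(2) psi_winv0[of t r1 \<Phi> "expo t x"] by fastforce
      qed
    qed
    have "free_eq (psi t \<Phi> 0 u) (psi t \<Phi> 0 (concat (map (\<lambda>(x, r). x @ r @ winv x) es)))"
      using es(1) psi_free_eq by (auto simp: null_expr_def)
    moreover have "psi t \<Phi> 0 u = u" by (rule psi0[where \<Phi>=\<Phi>, OF uA tA assms(14)])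
    moreover have "psi t \<Phi> 0 (concat (map (\<lambda>(x, r). x @ r @ winv x) es))
        = concat (map (\<lambda>(x, r). x @ r @ winv x) es')"
      unfolding es'_def by (rule psi_concat) (use elem in auto)
    ultimately have fe: "free_eq u (concat (map (\<lambda>(x, r). x @ r @ winv x) es'))" by simp
    have ok: "\<forall>(x, r)\<in>set es'. x \<in> words A \<and> (\<exists>r0 \<in> ?T. (r = r0 \<or> r = winv r0) \<and> Kidx \<Phi> A R w r0 \<le> \<rho> n)"
      unfolding es'_def using elem by fastforce
    have "null_expr A ?T u es'"
      unfolding null_expr_def using fe ok by fastforce
    moreover have "length es' \<le> \<alpha> n" using es(2) by (simp add: es'_def)
    ultimately show "\<exists>es. null_expr A ?T u es \<and> length es \<le> \<alpha> n \<and>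
        (\<forall>(x, r)\<in>set es. \<exists>r0\<in>?T. (r = r0 \<or> r = winv r0) \<and> Kidx \<Phi> A R w r0 \<le> \<rho> n)"
      using ok by fastforce
  qed
qed


end
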